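(* Let $k$ be a perfect field of characteristic $p>0$, let $R$ be an $\mathbb N$-graded domain of finite type over $R_0=k$, and let $x\in R$ be a homogeneous element of positive degree. If $R[1/x]$ is finitely generated as a $D_R$-module, then $D_R$ has nonzero elements of negative degree.
   Context: $D_R=D_{R/k}$ is the ring of $k$-linear differential operators on $R$; since $k$ is perfect and $R$ is $F$-finite, $D_R=\bigcup_{e\ge 0}\operatorname{Hom}_{R^{p^e}}(R,R)$, where $R^{p^e}$ is the subring of $p^e$-th powers. $D_R$ is graded: $\delta$ has degree $a$ if $\delta(R_j)\subset R_{j+a}$ for all $j$. The $D_R$-module structure on $R[1/x]$ is given as follows: for $\delta\in\operatorname{Hom}_{R^{p^e}}(R,R)$, $r\in R$ and $n\le p^e$, $\delta(r/x^n)=\delta(rx^{p^e-n})/x^{p^e}$. *)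

theory Defs
  imports Main "HOL-Computational_Algebra.Primes"
begin

text \<open>The graded ring R is the type 'a (an integral domain).  The grading is a family
  G :: nat \<Rightarrow> 'a set of homogeneous components; k = R_0 = G 0.\<close>

definition graded_ring :: "(nat \<Rightarrow> 'a::idom set) \<Rightarrow> bool" where
  "graded_ring G \<longleftrightarrow>
     (\<forall>n. 0 \<in> G n \<and> (\<forall>a\<in>G n. \<forall>b\<in>G n. a + b \<in> G n \<and> - a \<in> G n)) \<and>
     (\<forall>i j. \<forall>a\<in>G i. \<forall>b\<in>G j. a * b \<in> G (i + j)) \<and>
     (\<forall>r. \<exists>!c :: nat \<Rightarrow> 'a. finite {n. c n \<noteq> 0} \<and> (\<forall>n. c n \<in> G n) \<and>
            r = (\<Sum>n\<in>{n. c n \<noteq> 0}. c n))"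

inductive_set gen_alg :: "'a::idom set \<Rightarrow> 'a set" for A where
  base: "a \<in> A \<Longrightarrow> a \<in> gen_alg A"
| add: "a \<in> gen_alg A \<Longrightarrow> b \<in> gen_alg A \<Longrightarrow> a + b \<in> gen_alg A"
| mult: "a \<in> gen_alg A \<Longrightarrow> b \<in> gen_alg A \<Longrightarrow> a * b \<in> gen_alg A"

definition finite_type_over_R0 :: "(nat \<Rightarrow> 'a::idom set) \<Rightarrow> bool" where
  "finite_type_over_R0 G \<longleftrightarrow> (\<exists>S. finite S \<and> gen_alg (G 0 \<union> S) = UNIV)"

definition perfect_field_R0 :: "nat \<Rightarrow> (nat \<Rightarrow> 'a::idom set) \<Rightarrow> bool" where
  "perfect_field_R0 p G \<longleftrightarrow>
     (\<forall>a\<in>G 0. a \<noteq> 0 \<longrightarrow> (\<exists>b\<in>G 0. a * b = 1)) \<and>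
     (\<forall>a\<in>G 0. \<exists>b\<in>G 0. b ^ p = a)"

text \<open>Hom_{R^{p^e}}(R,R): additive maps linear over the subring of p^e-th powers.\<close>
definition diffop_level :: "nat \<Rightarrow> nat \<Rightarrow> ('a::idom \<Rightarrow> 'a) set" where
  "diffop_level p e = {\<delta>. (\<forall>a b. \<delta> (a + b) = \<delta> a + \<delta> b) \<and>
                          (\<forall>r s. \<delta> (r ^ (p ^ e) * s) = r ^ (p ^ e) * \<delta> s)}"

definition diffops :: "nat \<Rightarrow> ('a::idom \<Rightarrow> 'a) set" where
  "diffops p = (\<Union>e. diffop_level p e)"

definition Gz :: "(nat \<Rightarrow> 'a::idom set) \<Rightarrow> int \<Rightarrow> 'a set" where
  "Gz G n = (if n < 0 then {0} else G (nat n))"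

definition op_has_degree :: "(nat \<Rightarrow> 'a::idom set) \<Rightarrow> ('a \<Rightarrow> 'a) \<Rightarrow> int \<Rightarrow> bool" where
  "op_has_degree G \<delta> a \<longleftrightarrow> (\<forall>j. \<forall>r\<in>G j. \<delta> r \<in> Gz G (int j + a))"

text \<open>Elements of R[1/x] are represented by pairs (r,n) standing for r/x^n.\<close>
definition loc_eq :: "'a::idom \<Rightarrow> 'a \<times> nat \<Rightarrow> 'a \<times> nat \<Rightarrow> bool" where
  "loc_eq x u v \<longleftrightarrow> fst u * x ^ snd v = fst v * x ^ snd u"

text \<open>R[1/x] is finitely generated as a D_R-module: there are finitely many generators
  g_i = r_i/x^{n_i} such that every element equals \<Sum>_i \<delta>_i(g_i) with \<delta>_i \<in> D_R.
  Any finitely many operators lie in a common level e (levels increase), where we may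
  also take n_i \<le> p^e; then \<delta>_i(r_i/x^{n_i}) = \<delta>_i(r_i x^{p^e - n_i}) / x^{p^e}.\<close>
definition loc_fg_Dmodule :: "nat \<Rightarrow> 'a::idom \<Rightarrow> bool" where
  "loc_fg_Dmodule p x \<longleftrightarrow>
     (\<exists>gens :: ('a \<times> nat) list. \<forall>m :: 'a \<times> nat.
        \<exists>e ds. length ds = length gens \<and>
          (\<forall>i<length gens. ds ! i \<in> diffop_level p e \<and> snd (gens ! i) \<le> p ^ e) \<and>
          loc_eq x m ((\<Sum>i<length gens. (ds ! i) (fst (gens ! i) * x ^ (p ^ e - snd (gens ! i)))),
                      p ^ e))"

end

theory Submission
  imports Defs
begin

definition hproj :: "(nat \<Rightarrow> 'a::idom set) \<Rightarrow> nat \<Rightarrow> 'a \<Rightarrow> 'a" where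
  "hproj G n r = (THE c. finite {n. c n \<noteq> 0} \<and> (\<forall>n. c n \<in> G n) \<and>
      r = (\<Sum>n\<in>{n. c n \<noteq> 0}. c n)) n"

lemma gr_zero: "graded_ring G \<Longrightarrow> 0 \<in> G n"
  unfolding graded_ring_def by blast
lemma gr_add: "graded_ring G \<Longrightarrow> a \<in> G n \<Longrightarrow> b \<in> G n \<Longrightarrow> a + b \<in> G n"
  unfolding graded_ring_def by blast
lemma gr_mult: "graded_ring G \<Longrightarrow> a \<in> G i \<Longrightarrow> b \<in> G j \<Longrightarrow> a * b \<in> G (i + j)"
  unfolding graded_ring_def by blast

lemma gr_sum: "graded_ring G \<Longrightarrow> (\<And>i. i \<in> A \<Longrightarrow> f i \<in> G n) \<Longrightarrow> sum f A \<in> G n"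
  by (induction A rule: infinite_finite_induct) (auto intro: gr_zero gr_add)

lemma gr_pow: "graded_ring G \<Longrightarrow> u \<in> G m \<Longrightarrow> k \<ge> 1 \<Longrightarrow> u ^ k \<in> G (k * m)"
proof (induction k)
  case 0 then show ?case by simp
next
  case (Suc k)
  show ?case
  proof (cases "k = 0")
    case True then show ?thesis using Suc by simp
  next
    case False
    then have "u ^ k \<in> G (k * m)" using Suc by simp
    then have "u * u ^ k \<in> G (m + k * m)" using gr_mult[OF Suc(2) Suc(3)] by blast
    then show ?thesis by simp
  qed
qed

lemma hproj_unique:
  assumes "graded_ring G" "finite {n. c n \<noteq> 0}" "\<forall>n. c n \<in> G n"
    "r = (\<Sum>n\<in>{n. c n \<noteq> 0}. c n)"
  shows "hproj G m r = c m"
proof -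
  have ex: "\<exists>!c :: nat \<Rightarrow> 'a. finite {n. c n \<noteq> 0} \<and> (\<forall>n. c n \<in> G n) \<and>
            r = (\<Sum>n\<in>{n. c n \<noteq> 0}. c n)"
    using assms unfolding graded_ring_def by blast
  have "(THE c. finite {n. c n \<noteq> 0} \<and> (\<forall>n. c n \<in> G n) \<and>
      r = (\<Sum>n\<in>{n. c n \<noteq> 0}. c n)) = c"
    by (rule the1_equality[OF ex]) (use assms in auto)
  then show ?thesis unfolding hproj_def by simp
qed

lemma hproj_spec:
  assumes gr: "graded_ring G"
  shows "finite {n. hproj G n r \<noteq> 0} \<and> (\<forall>n. hproj G n r \<in> G n) \<and>
      r = (\<Sum>n\<in>{n. hproj G n r \<noteq> 0}. hproj G n r)"
proof -
  obtain c :: "nat \<Rightarrow> 'a" where c: "finite {n. c n \<noteq> 0}" "\<forall>n. c n \<in> G n"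
            "r = (\<Sum>n\<in>{n. c n \<noteq> 0}. c n)"
    using assms unfolding graded_ring_def by blast
  have "(\<lambda>n. hproj G n r) = c" using hproj_unique[OF gr c] by (intro ext) blast
  then have e: "\<And>n. hproj G n r = c n" by metis
  show ?thesis unfolding e using c by blast
qed

lemma hproj_sum_gen:
  assumes gr: "graded_ring G" and fin: "finite A" and c: "\<And>i. i \<in> A \<Longrightarrow> c i \<in> G (f i)"
    and r: "r = (\<Sum>i\<in>A. c i)"
  shows "hproj G m r = (\<Sum>i\<in>{i\<in>A. f i = m}. c i)"
proof -
  define c' where "c' n = (\<Sum>i\<in>{i\<in>A. f i = n}. c i)" for n
  have c'G: "\<forall>n. c' n \<in> G n" unfolding c'_def using c by (auto intro!: gr_sum[OF gr])
  have sub: "{n. c' n \<noteq> 0} \<subseteq> f ` A"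
  proof
    fix n assume n: "n \<in> {n. c' n \<noteq> 0}"
    show "n \<in> f ` A"
    proof (rule ccontr)
      assume "n \<notin> f ` A"
      then have "{i\<in>A. f i = n} = {}" by blast
      then have "c' n = 0" unfolding c'_def by (simp only: sum.empty)
      then show False using n by simp
    qed
  qed
  have finc': "finite {n. c' n \<noteq> 0}" using sub fin finite_subset by blast
  have "r = (\<Sum>n\<in>f ` A. c' n)" unfolding r c'_def by (rule sum.image_gen[OF fin])
  also have "\<dots> = (\<Sum>n\<in>{n. c' n \<noteq> 0}. c' n)"
    by (rule sum.mono_neutral_right) (use fin sub in auto)
  finally have "hproj G m r = c' m" using hproj_unique[OF gr finc' c'G] by blast
  then show ?thesis unfolding c'_def .
qed

lemma hproj_expand:
  assumes gr: "graded_ring G" and "finite A" "{n. hproj G n r \<noteq> 0} \<subseteq> A"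
  shows "r = (\<Sum>n\<in>A. hproj G n r)"
proof -
  have "r = (\<Sum>n\<in>{n. hproj G n r \<noteq> 0}. hproj G n r)" using hproj_spec[OF gr] by blast
  also have "\<dots> = (\<Sum>n\<in>A. hproj G n r)"
    by (rule sum.mono_neutral_left) (use assms in auto)
  finally show ?thesis .
qed

lemma hproj_hom:
  assumes gr: "graded_ring G" and "r \<in> G j"
  shows "hproj G n r = (if n = j then r else 0)"
proof -
  have "hproj G n r = (\<Sum>i\<in>{i\<in>{0::nat}. j = n}. r)"
    by (rule hproj_sum_gen[OF gr, where c = "\<lambda>_. r" and f = "\<lambda>_. j"]) (use assms in auto)
  then show ?thesis by (cases "n = j") auto
qed

lemma hproj_zero: assumes "graded_ring G" shows "hproj G n 0 = 0"
  using hproj_hom[OF assms gr_zero[OF assms, of 0], of n] by simp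

lemma hproj_add:
  assumes gr: "graded_ring G"
  shows "hproj G m (r + s) = hproj G m r + hproj G m s"
proof -
  define S where "S = {n. hproj G n r \<noteq> 0} \<union> {n. hproj G n s \<noteq> 0}"
  have fS: "finite S" unfolding S_def using hproj_spec[OF gr] by auto
  have "r + s = (\<Sum>n\<in>S. hproj G n r) + (\<Sum>n\<in>S. hproj G n s)"
    using hproj_expand[OF gr fS] unfolding S_def by auto
  also have "\<dots> = (\<Sum>n\<in>S. hproj G n r + hproj G n s)" by (simp add: sum.distrib)
  finally have "hproj G m (r + s) = (\<Sum>n\<in>{n\<in>S. n = m}. hproj G n r + hproj G n s)"
    by (intro hproj_sum_gen[OF gr fS]) (auto intro: gr_add[OF gr] hproj_spec[OF gr, THEN conjunct2, THEN conjunct1, rule_format])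
  also have "\<dots> = hproj G m r + hproj G m s"
  proof (cases "m \<in> S")
    case True
    then have "{n\<in>S. n = m} = {m}" by auto
    then show ?thesis by simp
  next
    case False
    then have "{n\<in>S. n = m} = {}" by auto
    then show ?thesis using False unfolding S_def by simp
  qed
  finally show ?thesis .
qed

lemma hproj_sum:
  assumes gr: "graded_ring G"
  shows "hproj G m (sum f I) = (\<Sum>i\<in>I. hproj G m (f i))"
  by (induction I rule: infinite_finite_induct) (auto simp: hproj_zero[OF gr] hproj_add[OF gr])

lemma hproj_mult_hom:
  assumes gr: "graded_ring G" and w: "w \<in> G k"
  shows "hproj G m (w * z) = (if k \<le> m then w * hproj G (m - k) z else 0)"
proof -
  define S where "S = {n. hproj G n z \<noteq> 0}"
  have fS: "finite S" unfolding S_def using hproj_spec[OF gr] by auto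
  have "w * z = w * (\<Sum>n\<in>S. hproj G n z)"
    using hproj_expand[OF gr fS, of z] unfolding S_def by simp
  also have "\<dots> = (\<Sum>n\<in>S. w * hproj G n z)" by (simp add: sum_distrib_left)
  finally have "w * z = (\<Sum>n\<in>S. w * hproj G n z)" .
  then have "hproj G m (w * z) = (\<Sum>n\<in>{n\<in>S. k + n = m}. w * hproj G n z)"
    by (intro hproj_sum_gen[OF gr fS]) (auto intro: gr_mult[OF gr w] hproj_spec[OF gr, THEN conjunct2, THEN conjunct1, rule_format])
  also have "\<dots> = (if k \<le> m then w * hproj G (m - k) z else 0)"
  proof (cases "k \<le> m")
    case True
    show ?thesis
    proof (cases "m - k \<in> S")
      case True
      then have "{n\<in>S. k + n = m} = {m - k}" using \<open>k \<le> m\<close> by auto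
      then show ?thesis using \<open>k \<le> m\<close> by simp
    next
      case False
      then have e: "{n\<in>S. k + n = m} = {}" using \<open>k \<le> m\<close> by auto
      have "hproj G (m - k) z = 0" using False unfolding S_def by simp
      then show ?thesis unfolding e using \<open>k \<le> m\<close> by simp
    qed
  next
    case False
    then have "{n\<in>S. k + n = m} = {}" by auto
    then show ?thesis using False by simp
  qed
  finally show ?thesis .
qed

definition projz :: "(nat \<Rightarrow> 'a::idom set) \<Rightarrow> int \<Rightarrow> 'a \<Rightarrow> 'a" where
  "projz G k s = (if k < 0 then 0 else hproj G (nat k) s)"

lemma projz_Gz: "graded_ring G \<Longrightarrow> projz G k s \<in> Gz G k"
  unfolding projz_def Gz_def using hproj_spec by auto

lemma projz_zero: "graded_ring G \<Longrightarrow> projz G k 0 = 0"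
  unfolding projz_def using hproj_zero by auto

lemma projz_add: "graded_ring G \<Longrightarrow> projz G k (a + b) = projz G k a + projz G k b"
  unfolding projz_def using hproj_add by auto

lemma projz_mult_hom:
  assumes gr: "graded_ring G" and w: "w \<in> G k"
  shows "projz G (int k + i) (w * z) = w * projz G i z"
proof (cases "i < 0")
  case True
  then show ?thesis unfolding projz_def using hproj_mult_hom[OF gr w] by auto
next
  case False
  then have "nat (int k + i) = k + nat i" by simp
  then show ?thesis unfolding projz_def using hproj_mult_hom[OF gr w] False by auto
qed

lemma char_eq:
  assumes "prime p" "of_nat p = (0::'a::idom)"
  shows "CHAR('a) = p"
proof -
  have d: "CHAR('a) dvd p" using assms(2) of_nat_eq_0_iff_char_dvd by blast
  have "CHAR('a) \<noteq> 1" using of_nat_eq_0_iff_char_dvd[of 1, where 'a='a] by auto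
  then show ?thesis using d assms(1) prime_nat_iff by blast
qed

lemma frob_sum:
  assumes "prime p" "of_nat p = (0::'a::idom)"
  shows "(sum (f :: 'b \<Rightarrow> 'a) A) ^ (p ^ e) = (\<Sum>i\<in>A. f i ^ (p ^ e))"
  using freshmans_dream_sum'[of "p ^ e" e f A] char_eq[OF assms] assms(1) by simp

lemma additive_zero: "(\<forall>a b. \<delta> (a + b) = \<delta> a + \<delta> b) \<Longrightarrow> (\<delta> :: 'a::idom \<Rightarrow> 'a) 0 = 0"
  by (metis add_cancel_right_right add_0)

lemma additive_sum:
  assumes "\<forall>a b. (\<delta> :: 'a::idom \<Rightarrow> 'a) (a + b) = \<delta> a + \<delta> b"
  shows "\<delta> (sum f I) = (\<Sum>i\<in>I. \<delta> (f i))"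
  by (induction I rule: infinite_finite_induct) (auto simp: assms additive_zero[OF assms])

definition hcomp :: "(nat \<Rightarrow> 'a::idom set) \<Rightarrow> ('a \<Rightarrow> 'a) \<Rightarrow> int \<Rightarrow> 'a \<Rightarrow> 'a" where
  "hcomp G \<delta> a r = (\<Sum>n\<in>{n. hproj G n r \<noteq> 0}. projz G (int n + a) (\<delta> (hproj G n r)))"

lemma hcomp_gen:
  assumes gr: "graded_ring G" and add: "\<forall>a b. \<delta> (a + b) = \<delta> a + \<delta> b"
    and fin: "finite A" and sub: "{n. hproj G n r \<noteq> 0} \<subseteq> A"
  shows "hcomp G \<delta> a r = (\<Sum>n\<in>A. projz G (int n + a) (\<delta> (hproj G n r)))"
  unfolding hcomp_def
  by (rule sum.mono_neutral_left[OF fin sub]) (auto simp: additive_zero[OF add] projz_zero[OF gr])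

lemma hcomp_hom:
  assumes gr: "graded_ring G" and add: "\<forall>a b. \<delta> (a + b) = \<delta> a + \<delta> b" and r: "r \<in> G j"
  shows "hcomp G \<delta> a r = projz G (int j + a) (\<delta> r)"
proof -
  have "{n. hproj G n r \<noteq> 0} \<subseteq> {j}" using hproj_hom[OF gr r] by auto
  from hcomp_gen[OF gr add _ this] show ?thesis using hproj_hom[OF gr r] by simp
qed

lemma hcomp_zero:
  assumes gr: "graded_ring G"
  shows "hcomp G \<delta> a 0 = 0"
  unfolding hcomp_def using hproj_zero[OF gr] by simp

lemma hcomp_add:
  assumes gr: "graded_ring G" and add: "\<forall>a b. \<delta> (a + b) = \<delta> a + \<delta> b"
  shows "hcomp G \<delta> a (r + s) = hcomp G \<delta> a r + hcomp G \<delta> a s"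
proof -
  define A where "A = {n. hproj G n r \<noteq> 0} \<union> {n. hproj G n s \<noteq> 0} \<union> {n. hproj G n (r + s) \<noteq> 0}"
  have fA: "finite A" unfolding A_def using hproj_spec[OF gr] by auto
  have "hcomp G \<delta> a (r + s) = (\<Sum>n\<in>A. projz G (int n + a) (\<delta> (hproj G n (r + s))))"
    by (rule hcomp_gen[OF gr add fA]) (auto simp: A_def)
  also have "\<dots> = (\<Sum>n\<in>A. projz G (int n + a) (\<delta> (hproj G n r)) + projz G (int n + a) (\<delta> (hproj G n s)))"
    by (simp add: hproj_add[OF gr] add projz_add[OF gr])
  also have "\<dots> = hcomp G \<delta> a r + hcomp G \<delta> a s"
  proof -
    have "hcomp G \<delta> a r = (\<Sum>n\<in>A. projz G (int n + a) (\<delta> (hproj G n r)))"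
      by (rule hcomp_gen[OF gr add fA]) (auto simp: A_def)
    moreover have "hcomp G \<delta> a s = (\<Sum>n\<in>A. projz G (int n + a) (\<delta> (hproj G n s)))"
      by (rule hcomp_gen[OF gr add fA]) (auto simp: A_def)
    ultimately show ?thesis by (simp add: sum.distrib)
  qed
  finally show ?thesis .
qed

lemma hcomp_sum:
  assumes gr: "graded_ring G" and add: "\<forall>a b. \<delta> (a + b) = \<delta> a + \<delta> b"
  shows "hcomp G \<delta> a (sum f I) = (\<Sum>i\<in>I. hcomp G \<delta> a (f i))"
  by (induction I rule: infinite_finite_induct) (auto simp: hcomp_zero[OF gr] hcomp_add[OF gr add])

lemma hcomp_level:
  fixes G :: "nat \<Rightarrow> 'a::idom set"
  assumes gr: "graded_ring G" and pe: "prime p" "of_nat p = (0::'a::idom)"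
    and d: "\<delta> \<in> diffop_level p e"
  shows "hcomp G \<delta> a \<in> diffop_level p e"
proof -
  let ?q = "p ^ e"
  have add: "\<forall>a b. \<delta> (a + b) = \<delta> a + \<delta> b" and lin: "\<And>r s. \<delta> (r ^ ?q * s) = r ^ ?q * \<delta> s"
    using d unfolding diffop_level_def by auto
  have "p \<ge> 1" using pe(1) prime_gt_0_nat by (simp add: Suc_leI)
  then have q1: "?q \<ge> 1" using one_le_power by blast
  have step1: "hcomp G \<delta> a (u ^ ?q * v) = u ^ ?q * hcomp G \<delta> a v" if u: "u \<in> G m" and v: "v \<in> G n" for u v m n
  proof -
    have uq: "u ^ ?q \<in> G (?q * m)" using gr_pow[OF gr u q1] .
    have "u ^ ?q * v \<in> G (?q * m + n)" using gr_mult[OF gr uq v] .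
    then have "hcomp G \<delta> a (u ^ ?q * v) = projz G (int (?q * m + n) + a) (\<delta> (u ^ ?q * v))"
      using hcomp_hom[OF gr add] by blast
    also have "\<dots> = projz G (int (?q * m) + (int n + a)) (u ^ ?q * \<delta> v)"
      by (simp add: lin add.assoc)
    also have "\<dots> = u ^ ?q * projz G (int n + a) (\<delta> v)"
      by (rule projz_mult_hom[OF gr uq])
    also have "\<dots> = u ^ ?q * hcomp G \<delta> a v" using hcomp_hom[OF gr add v] by simp
    finally show ?thesis .
  qed
  have step2: "hcomp G \<delta> a (u ^ ?q * s) = u ^ ?q * hcomp G \<delta> a s" if u: "u \<in> G m" for u s m
  proof -
    define S where "S = {n. hproj G n s \<noteq> 0}"
    have fS: "finite S" unfolding S_def using hproj_spec[OF gr] by auto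
    have s: "s = (\<Sum>n\<in>S. hproj G n s)" using hproj_expand[OF gr fS] S_def by auto
    have "hcomp G \<delta> a (u ^ ?q * s) = hcomp G \<delta> a (\<Sum>n\<in>S. u ^ ?q * hproj G n s)"
      by (subst s) (simp add: sum_distrib_left)
    also have "\<dots> = (\<Sum>n\<in>S. u ^ ?q * hcomp G \<delta> a (hproj G n s))"
      by (simp add: hcomp_sum[OF gr add] step1[OF u hproj_spec[OF gr, THEN conjunct2, THEN conjunct1, rule_format]])
    also have "\<dots> = u ^ ?q * hcomp G \<delta> a s"
      by (subst (2) s) (simp add: hcomp_sum[OF gr add] sum_distrib_left)
    finally show ?thesis .
  qed
  have "hcomp G \<delta> a (t ^ ?q * s) = t ^ ?q * hcomp G \<delta> a s" for t s
  proof -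
    define T where "T = {n. hproj G n t \<noteq> 0}"
    have fT: "finite T" unfolding T_def using hproj_spec[OF gr] by auto
    have t: "t = (\<Sum>n\<in>T. hproj G n t)" using hproj_expand[OF gr fT] T_def by auto
    have tq0: "(\<Sum>n\<in>T. hproj G n t) ^ ?q = (\<Sum>n\<in>T. hproj G n t ^ ?q)"
      using frob_sum[OF pe, of "\<lambda>n. hproj G n t" T e] by simp
    have tq: "t ^ ?q = (\<Sum>n\<in>T. hproj G n t ^ ?q)" using tq0 t by metis
    have "hcomp G \<delta> a (t ^ ?q * s) = hcomp G \<delta> a (\<Sum>n\<in>T. hproj G n t ^ ?q * s)"
      by (simp add: tq sum_distrib_right)
    also have "\<dots> = (\<Sum>n\<in>T. hproj G n t ^ ?q * hcomp G \<delta> a s)"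
      by (simp add: hcomp_sum[OF gr add] step2[OF hproj_spec[OF gr, THEN conjunct2, THEN conjunct1, rule_format]])
    also have "\<dots> = t ^ ?q * hcomp G \<delta> a s" by (simp add: tq sum_distrib_right)
    finally show ?thesis .
  qed
  then show ?thesis unfolding diffop_level_def using hcomp_add[OF gr add] by auto
qed

lemma no_lowering:
  assumes gr: "graded_ring G" and pe: "prime p" "of_nat p = (0::'a::idom)"
    and H: "\<not> (\<exists>\<delta>\<in>diffops p. \<delta> \<noteq> (\<lambda>_. 0) \<and> (\<exists>a<0. op_has_degree G (\<delta>::'a\<Rightarrow>'a) a))"
    and d: "\<delta> \<in> diffop_level p e" and r: "r \<in> G j" and nj: "n < j"
  shows "hproj G n (\<delta> r) = 0"
proof (rule ccontr)
  assume ne: "hproj G n (\<delta> r) \<noteq> 0"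
  have add: "\<forall>a b. \<delta> (a + b) = \<delta> a + \<delta> b" using d unfolding diffop_level_def by auto
  define a where "a = int n - int j"
  define D where "D = hcomp G \<delta> a"
  have "D \<in> diffops p" unfolding D_def diffops_def using hcomp_level[OF gr pe d] by blast
  moreover have "D r \<noteq> 0" unfolding D_def using hcomp_hom[OF gr add r] ne by (simp add: a_def projz_def)
  then have "D \<noteq> (\<lambda>_. 0)" by auto
  moreover have "a < 0" using nj a_def by simp
  moreover have "op_has_degree G D a"
    unfolding op_has_degree_def D_def using hcomp_hom[OF gr add] projz_Gz[OF gr] by simp
  ultimately show False using H by blast
qed

lemma no_lowering2:
  assumes gr: "graded_ring G" and pe: "prime p" "of_nat p = (0::'a::idom)"
    and H: "\<not> (\<exists>\<delta>\<in>diffops p. \<delta> \<noteq> (\<lambda>_. 0) \<and> (\<exists>a<0. op_has_degree G (\<delta>::'a\<Rightarrow>'a) a))"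
    and d: "\<delta> \<in> diffop_level p e" and low: "\<forall>n<L. hproj G n r = 0" and nL: "n < L"
  shows "hproj G n (\<delta> r) = 0"
proof -
  have add: "\<forall>a b. \<delta> (a + b) = \<delta> a + \<delta> b" using d unfolding diffop_level_def by auto
  define S where "S = {n. hproj G n r \<noteq> 0}"
  have fS: "finite S" unfolding S_def using hproj_spec[OF gr] by auto
  have rS: "r = (\<Sum>m\<in>S. hproj G m r)" using hproj_expand[OF gr fS] S_def by auto
  have "hproj G n (\<delta> r) = (\<Sum>m\<in>S. hproj G n (\<delta> (hproj G m r)))"
    by (subst rS) (simp add: additive_sum[OF add] hproj_sum[OF gr])
  also have "\<dots> = 0"
  proof (rule sum.neutral, rule ballI)
    fix m assume "m \<in> S"
    then have "m \<ge> L" using low unfolding S_def by (meson leI mem_Collect_eq)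
    then show "hproj G n (\<delta> (hproj G m r)) = 0"
      using no_lowering[OF gr pe H d hproj_spec[OF gr, THEN conjunct2, THEN conjunct1, rule_format]] nL
      by simp
  qed
  finally show ?thesis .
qed

theorem proposition3p2:
  fixes G :: "nat \<Rightarrow> 'a::idom set" and p :: nat and x :: 'a
  assumes "prime p" and "of_nat p = (0::'a)"
    and "graded_ring G"
    and "perfect_field_R0 p G"
    and "finite_type_over_R0 G"
    and "x \<noteq> 0" and "\<exists>d>0. x \<in> G d"
    and "loc_fg_Dmodule p x"
  shows "\<exists>\<delta>\<in>diffops p. \<delta> \<noteq> (\<lambda>_. 0) \<and> (\<exists>a<0. op_has_degree G \<delta> a)"
proof (rule ccontr)
  assume H: "\<not> (\<exists>\<delta>\<in>diffops p. \<delta> \<noteq> (\<lambda>_. 0) \<and> (\<exists>a<0. op_has_degree G \<delta> a))"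
  note gr = assms(3) and pe = assms(1) assms(2)
  obtain d where d: "d > 0" "x \<in> G d" using assms(7) by blast
  obtain gens :: "('a \<times> nat) list" where gens: "\<forall>m :: 'a \<times> nat.
        \<exists>e ds. length ds = length gens \<and>
          (\<forall>i<length gens. ds ! i \<in> diffop_level p e \<and> snd (gens ! i) \<le> p ^ e) \<and>
          loc_eq x m ((\<Sum>i<length gens. (ds ! i) (fst (gens ! i) * x ^ (p ^ e - snd (gens ! i)))),
                      p ^ e)"
    using assms(8) unfolding loc_fg_Dmodule_def by blast
  define M where "M = (\<Sum>i<length gens. snd (gens ! i))"
  define N where "N = Suc M"
  obtain e ds where len: "length ds = length gens"
    and lv: "\<forall>i<length gens. ds ! i \<in> diffop_level p e \<and> snd (gens ! i) \<le> p ^ e"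
    and eq: "loc_eq x (1, N) ((\<Sum>i<length gens. (ds ! i) (fst (gens ! i) * x ^ (p ^ e - snd (gens ! i)))),
                      p ^ e)"
    using gens by blast
  define q where "q = p ^ e"
  define y where "y i = fst (gens ! i) * x ^ (q - snd (gens ! i))" for i
  define S where "S = (\<Sum>i<length gens. (ds ! i) (y i))"
  have xq: "x ^ q = S * x ^ N" using eq unfolding loc_eq_def S_def y_def q_def by simp
  have ylow: "\<forall>n<(q - M) * d. hproj G n (y i) = 0" if i: "i < length gens" for i
  proof (intro allI impI)
    fix n assume n: "n < (q - M) * d"
    have ni: "snd (gens ! i) \<le> M" unfolding M_def using i
      by (intro member_le_sum) auto
    show "hproj G n (y i) = 0"
    proof (cases "q - snd (gens ! i) = 0")
      case True then have "q - M = 0" using ni by simp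
      then show ?thesis using n by simp
    next
      case False
      have xk: "x ^ (q - snd (gens ! i)) \<in> G ((q - snd (gens ! i)) * d)"
        using gr_pow[OF gr d(2)] False by simp
      have le: "(q - M) * d \<le> (q - snd (gens ! i)) * d" using ni by (simp add: diff_le_mono2 mult_le_mono1)
      have "y i = x ^ (q - snd (gens ! i)) * fst (gens ! i)" by (simp add: y_def mult.commute)
      then show ?thesis using hproj_mult_hom[OF gr xk, of n] n le by simp
    qed
  qed
  have Slow: "hproj G n S = 0" if n: "n < (q - M) * d" for n
  proof -
    have "hproj G n S = (\<Sum>i<length gens. hproj G n ((ds ! i) (y i)))"
      unfolding S_def by (rule hproj_sum[OF gr])
    also have "\<dots> = 0"
    proof (rule sum.neutral, rule ballI)
      fix i assume "i \<in> {..<length gens}"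
      then have i: "i < length gens" by simp
      show "hproj G n ((ds ! i) (y i)) = 0"
        using no_lowering2[OF gr pe H _ ylow[OF i] n] lv i by blast
    qed
    finally show ?thesis .
  qed
  have q1: "q \<ge> 1" unfolding q_def using pe(1) prime_gt_0_nat one_le_power by (simp add: Suc_leI)
  have xqG: "x ^ q \<in> G (q * d)" using gr_pow[OF gr d(2) q1] .
  have "hproj G (q * d) (x ^ q) = x ^ q" using hproj_hom[OF gr xqG] by simp
  moreover have xN: "x ^ N \<in> G (N * d)" by (rule gr_pow[OF gr d(2)]) (simp add: N_def)
  have "hproj G (q * d) (x ^ N * S) = 0"
  proof (cases "N * d \<le> q * d")
    case True
    then have Nq: "N \<le> q" using d(1) by simp
    have "q * d - N * d = (q - N) * d" by (simp add: diff_mult_distrib)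
    also have "\<dots> < (q - M) * d" using Nq N_def d(1) by simp
    finally have "hproj G (q * d - N * d) S = 0" by (rule Slow)
    then show ?thesis using hproj_mult_hom[OF gr xN] True by simp
  next
    case False
    then show ?thesis using hproj_mult_hom[OF gr xN] by simp
  qed
  ultimately have "x ^ q = 0" using xq by (simp add: mult.commute)
  then show False using assms(6) by simp
qed

end
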